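(* Let $n,N\ge 1$, let $J\in\Gamma_0(\mathbb{R}^n)$, and let $H_1,\dots,H_N\in\Gamma_0(\mathbb{R}^n)$ with $\mathrm{dom}\, H_j=\mathbb{R}^n$ for every $j$. Define $S_H:\mathbb{R}^n\times\mathbb{R}^N\to\mathbb{R}\cup\{+\infty\}$ by $$S_H(x,t_1,\dots,t_N)=\sup_{p\in\mathbb{R}^n}\Big(\langle p,x\rangle-J^*(p)-\sum_{j=1}^N t_jH_j(p)\Big)$$ if $t_1,\dots,t_N\ge 0$, and $S_H(x,t_1,\dots,t_N)=+\infty$ otherwise. Then $S_H\in\Gamma_0(\mathbb{R}^{n+N})$ and its Legendre transform is $$S_H^*(p,E_1^-,\dots,E_N^-)=J^*(p)+\sum_{j=1}^N I\{E_j^-+H_j(p)\le 0\}\qquad\text{for all }p\in\mathbb{R}^n,\ (E_1^-,\dots,E_N^-)\in\mathbb{R}^N.$$ Moreover, if in addition hypotheses (H1) and (H2) hold, then $S_H(x,t_1,\dots,t_N)$ is finite for every $x\in\mathbb{R}^n$ and every $t_1,\dots,t_N\ge 0$ that are not all zero.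
   Context: $\Gamma_0(\mathbb{R}^m)$ denotes the set of proper, convex, lower semicontinuous functions $\mathbb{R}^m\to\mathbb{R}\cup\{+\infty\}$. For $f\in\Gamma_0(\mathbb{R}^m)$, $f^*(p)=\sup_x \langle p,x\rangle-f(x)$ is its Legendre transform. $I\{\cdot\}$ denotes the indicator function of the set described by the constraint (value $0$ on the set, $+\infty$ off it). A function $g$ is 1-coercive if $g(x)/\|x\|\to+\infty$ as $\|x\|\to\infty$. Hypothesis (H1): each $H_j:\mathbb{R}^n\to\mathbb{R}$ ($j=1,\dots,N$) is finite-valued, convex and 1-coercive, and at least one $H_j$ is strictly convex. Hypothesis (H2): $J\in\Gamma_0(\mathbb{R}^n)$. *)

theory Defs
  imports "HOL-Analysis.Analysis" "HOL-Library.Extended_Real"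
begin

text \<open>Functions with values in R \<union> {+\<infinity>} are modelled as ereal-valued functions.\<close>

definition epigraph_e :: "('a \<Rightarrow> ereal) \<Rightarrow> ('a \<times> real) set" where
  "epigraph_e f = {(x, r). f x \<le> ereal r}"

definition proper_e :: "('a \<Rightarrow> ereal) \<Rightarrow> bool" where
  "proper_e f \<longleftrightarrow> (\<forall>x. f x \<noteq> -\<infinity>) \<and> (\<exists>x. f x \<noteq> \<infinity>)"

definition Gamma0 :: "('a::euclidean_space \<Rightarrow> ereal) \<Rightarrow> bool" where
  "Gamma0 f \<longleftrightarrow> proper_e f \<and> convex (epigraph_e f) \<and> closed (epigraph_e f)"

definition legendre :: "('a::real_inner \<Rightarrow> ereal) \<Rightarrow> 'a \<Rightarrow> ereal" where
  "legendre f p = (SUP x. ereal (inner p x) - f x)"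

definition indicator_e :: "bool \<Rightarrow> ereal" where
  "indicator_e P = (if P then 0 else \<infinity>)"

definition strictly_convex_on :: "'a::real_vector set \<Rightarrow> ('a \<Rightarrow> real) \<Rightarrow> bool" where
  "strictly_convex_on S f \<longleftrightarrow> (\<forall>x\<in>S. \<forall>y\<in>S. x \<noteq> y \<longrightarrow> (\<forall>u::real. 0 < u \<and> u < 1 \<longrightarrow>
      f ((1 - u) *\<^sub>R x + u *\<^sub>R y) < (1 - u) * f x + u * f y))"

definition one_coercive :: "('a::real_normed_vector \<Rightarrow> real) \<Rightarrow> bool" where
  "one_coercive g \<longleftrightarrow> filterlim (\<lambda>x. g x / norm x) at_top at_infinity"

definition S_H :: "('a::euclidean_space \<Rightarrow> ereal) \<Rightarrow> ('N::finite \<Rightarrow> 'a \<Rightarrow> real)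
    \<Rightarrow> 'a \<times> (real ^ 'N) \<Rightarrow> ereal" where
  "S_H J H = (\<lambda>(x, t). if (\<forall>j. t $ j \<ge> 0)
      then (SUP p. ereal (inner p x) - legendre J p - ereal (\<Sum>j\<in>UNIV. t $ j * H j p))
      else \<infinity>)"

end

theory Submission
  imports Defs
begin

lemma affine_minorant:
  fixes f :: "'a::euclidean_space \<Rightarrow> ereal"
  assumes cv: "convex (epigraph_e f)" and cl: "closed (epigraph_e f)"
    and fz: "f z = ereal m" and mc: "c < m"
  shows "\<exists>w d. (\<forall>x. ereal (inner w x + d) \<le> f x) \<and> inner w z + d > c"
proof -
  have "(z, c) \<notin> epigraph_e f" using fz mc by (simp add: epigraph_e_def)
  from separating_hyperplane_closed_point[OF cv cl this]
  obtain a b where ab: "inner a (z,c) < b" "\<forall>y\<in>epigraph_e f. inner a y > b" by blast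
  obtain v \<beta> where a: "a = (v, \<beta>)" by (cases a)
  have zm: "(z, m) \<in> epigraph_e f" using fz by (simp add: epigraph_e_def)
  have 1: "inner v z + \<beta> * c < b" using ab(1) a by simp
  have 2: "inner v z + \<beta> * m > b" using ab(2) zm a by auto
  have "\<beta> * c < \<beta> * m" using 1 2 by linarith
  hence bp: "\<beta> > 0" using mc by (smt (verit) mult_le_cancel_left)
  have low: "ereal (inner (- v /\<^sub>R \<beta>) x + b / \<beta>) \<le> f x" for x
  proof (cases "f x")
    case (real r)
    have "(x, r) \<in> epigraph_e f" using real by (simp add: epigraph_e_def)
    hence "inner v x + \<beta> * r > b" using ab(2) a by auto
    hence "(b - inner v x) / \<beta> < r" using bp by (simp add: divide_less_eq algebra_simps)
    thus ?thesis using real bp by (simp add: diff_divide_distrib divide_inverse right_diff_distrib mult.commute)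
  next
    case PInf thus ?thesis by simp
  next
    case MInf
    have "(x, (- \<bar>b\<bar> - \<bar>inner v x\<bar>) / \<beta>) \<in> epigraph_e f" using MInf by (simp add: epigraph_e_def)
    hence "inner v x + \<beta> * ((- \<bar>b\<bar> - \<bar>inner v x\<bar>) / \<beta>) > b" using ab(2) a by auto
    hence "inner v x - \<bar>b\<bar> - \<bar>inner v x\<bar> > b" using bp by simp
    hence False by linarith
    thus ?thesis ..
  qed
  have "inner (- v /\<^sub>R \<beta>) z + b / \<beta> > c"
  proof -
    have "(b - inner v z) / \<beta> > c" using 1 bp by (simp add: less_divide_eq algebra_simps)
    thus ?thesis by (simp add: diff_divide_distrib divide_inverse right_diff_distrib mult.commute)
  qed
  with low show ?thesis by blast
qed

lemma FY: "ereal (inner p x) - f x \<le> legendre f p"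
  unfolding legendre_def by (rule SUP_upper) auto

lemma ereal_swap: "ereal a - y \<le> z \<Longrightarrow> ereal a - z \<le> (y::ereal)"
  by (cases y; cases z) auto

lemma S_H_eq: "S_H J H (x, t) = (if (\<forall>j. t $ j \<ge> 0)
      then (SUP p. ereal (inner p x) - legendre J p - ereal (\<Sum>j\<in>UNIV. t $ j * H j p))
      else \<infinity>)"
  by (simp add: S_H_def)

lemma S_ge: "\<forall>j. t $ j \<ge> 0 \<Longrightarrow>
   ereal (inner q x) - legendre J q - ereal (\<Sum>j\<in>UNIV. t $ j * H j q) \<le> S_H J H (x, t)"
  unfolding S_H_eq by (simp, rule SUP_upper) auto

lemma S_le: "\<forall>j. t $ j \<ge> 0 \<Longrightarrow>
   (\<And>q. ereal (inner q x) - legendre J q - ereal (\<Sum>j\<in>UNIV. t $ j * H j q) \<le> B) \<Longrightarrow> S_H J H (x, t) \<le> B"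
  unfolding S_H_eq by (simp, rule SUP_least) auto

lemma S_zero: "S_H J H (x, 0) \<le> J x"
proof (rule S_le)
  fix q
  have "ereal (inner q x) - J x \<le> legendre J q" by (rule FY)
  hence "ereal (inner q x) - legendre J q \<le> J x" by (rule ereal_swap)
  thus "ereal (inner q x) - legendre J q - ereal (\<Sum>j\<in>UNIV. (0::real^'b) $ j * H j q) \<le> J x" by simp
qed simp

lemma T_convex: "convex {z::(('a::euclidean_space \<times> (real^'N)) \<times> real). \<forall>j. 0 \<le> snd (fst z) $ j}"
  by (auto simp: convex_def)

lemma T_closed: "closed {z::(('a::euclidean_space \<times> (real^'N)) \<times> real). \<forall>j. 0 \<le> snd (fst z) $ j}"
  by (intro closed_Collect_all closed_Collect_le continuous_intros)

lemma G_cc: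
  fixes J :: "'a::euclidean_space \<Rightarrow> ereal" and H :: "'N::finite \<Rightarrow> 'a \<Rightarrow> real" and p :: 'a
  defines "G \<equiv> {z::(('a \<times> (real^'N)) \<times> real). ereal (inner p (fst (fst z))) - legendre J p
       - ereal (\<Sum>j\<in>UNIV. snd (fst z) $ j * H j p) \<le> ereal (snd z)}"
  assumes "legendre J p \<noteq> -\<infinity>"
  shows "convex G \<and> closed G"
proof (cases "legendre J p")
  case (real c)
  have "G = {z. inner ((p, \<chi> j. - H j p), -1) z \<le> c}"
    unfolding G_def real by (auto simp: inner_vec_def sum_negf algebra_simps)
  thus ?thesis by (simp add: convex_halfspace_le closed_halfspace_le)
next
  case PInf
  hence "G = UNIV" unfolding G_def by auto
  thus ?thesis by simp
qed (use assms in simp)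

theorem proposition3p1:
  fixes J :: "'a::euclidean_space \<Rightarrow> ereal"
    and H :: "'N::finite \<Rightarrow> 'a \<Rightarrow> real"
  assumes J: "Gamma0 J"
    and H: "\<And>j. Gamma0 (\<lambda>p. ereal (H j p))"
  shows "Gamma0 (S_H J H)
    \<and> (\<forall>p E. legendre (S_H J H) (p, E) =
          legendre J p + (\<Sum>j\<in>UNIV. indicator_e (E $ j + H j p \<le> 0)))
    \<and> (((\<forall>j. convex_on UNIV (H j) \<and> one_coercive (H j))
          \<and> (\<exists>j. strictly_convex_on UNIV (H j)) \<and> Gamma0 J)
        \<longrightarrow> (\<forall>x t. (\<forall>j. t $ j \<ge> 0) \<and> (\<exists>j. t $ j \<noteq> 0)
              \<longrightarrow> S_H J H (x, t) \<noteq> \<infinity> \<and> S_H J H (x, t) \<noteq> -\<infinity>))"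
proof -
  have Jp: "proper_e J" and Jcv: "convex (epigraph_e J)" and Jcl: "closed (epigraph_e J)"
    using J by (auto simp: Gamma0_def)
  have Hcv: "convex (epigraph_e (\<lambda>p. ereal (H j p)))" and Hcl: "closed (epigraph_e (\<lambda>p. ereal (H j p)))" for j
    using H[of j] by (auto simp: Gamma0_def)
  have Jnm: "J x \<noteq> -\<infinity>" for x using Jp by (simp add: proper_e_def)
  obtain x0 j0 where Jx0: "J x0 = ereal j0"
    using Jp Jnm unfolding proper_e_def by (metis ereal_cases)
  have Jsnm: "legendre J p \<noteq> -\<infinity>" for p
  proof -
    have "ereal (inner p x0) - ereal j0 \<le> legendre J p" using FY[of p x0 J] Jx0 by simp
    thus ?thesis by auto
  qed
  obtain w d where wd: "\<forall>x. ereal (inner w x + d) \<le> J x"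
    using affine_minorant[OF Jcv Jcl Jx0, of "j0 - 1"] by auto
  have "legendre J w \<le> ereal (- d)"
    unfolding legendre_def
  proof (rule SUP_least)
    fix x
    show "ereal (inner w x) - J x \<le> ereal (- d)"
      using wd[rule_format, of x] by (cases "J x") auto
  qed
  then obtain p0 c0 where p0: "legendre J p0 = ereal c0"
    using Jsnm[of w] by (cases "legendre J w") auto
  have Snm: "S_H J H (x, t) \<noteq> -\<infinity>" for x t
  proof (cases "\<forall>j. t $ j \<ge> 0")
    case True
    from S_ge[OF True, of p0 x J H] p0 show ?thesis by auto
  next
    case False thus ?thesis by (auto simp add: S_H_eq)
  qed
  have part1: "Gamma0 (S_H J H)"
  proof -
    have "S_H J H (x0, 0) \<noteq> \<infinity>" using S_zero[of J H x0] Jx0 by auto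
    hence prp: "proper_e (S_H J H)" using Snm unfolding proper_e_def by auto
    define T where "T = {z::(('a \<times> (real^'N)) \<times> real). \<forall>j. 0 \<le> snd (fst z) $ j}"
    define G where "G = (\<lambda>p. {z::(('a \<times> (real^'N)) \<times> real). ereal (inner p (fst (fst z))) - legendre J p
       - ereal (\<Sum>j\<in>UNIV. snd (fst z) $ j * H j p) \<le> ereal (snd z)})"
    have epi: "epigraph_e (S_H J H) = T \<inter> (\<Inter>p. G p)"
      unfolding epigraph_e_def T_def G_def by (auto simp: S_H_eq SUP_le_iff split: if_splits)
    have "convex (G p) \<and> closed (G p)" for p
      unfolding G_def by (rule G_cc[OF Jsnm])
    hence "convex (T \<inter> (\<Inter>p. G p)) \<and> closed (T \<inter> (\<Inter>p. G p))"
      using T_convex T_closed unfolding T_def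
      by (intro conjI convex_Int closed_Int convex_Inter closed_Inter) auto
    thus ?thesis using prp epi by (simp add: Gamma0_def)
  qed
  have part2: "legendre (S_H J H) (p, E) =
          legendre J p + (\<Sum>j\<in>UNIV. indicator_e (E $ j + H j p \<le> 0))" for p E
  proof -
    let ?L = "legendre (S_H J H) (p, E)"
    have low0: "legendre J p \<le> ?L"
      unfolding legendre_def[of J]
    proof (rule SUP_least)
      fix x
      have "ereal (inner p x) - J x \<le> ereal (inner p x) - S_H J H (x, 0)"
        by (rule ereal_minus_mono) (auto simp: S_zero)
      also have "\<dots> = ereal (inner (p, E) (x, 0)) - S_H J H (x, 0)" by simp
      also have "\<dots> \<le> ?L" by (rule FY)
      finally show "ereal (inner p x) - J x \<le> ?L" .
    qed
    show ?thesis
    proof (cases "\<forall>j. E $ j + H j p \<le> 0")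
      case True
      hence rhs: "legendre J p + (\<Sum>j\<in>UNIV. indicator_e (E $ j + H j p \<le> 0)) = legendre J p"
        by (simp add: indicator_e_def)
      have "?L \<le> legendre J p"
        unfolding legendre_def[of "S_H J H"]
      proof (rule SUP_least)
        fix z :: "'a \<times> (real^'N)"
        obtain x t where z: "z = (x, t)" by (cases z)
        show "ereal (inner (p, E) z) - S_H J H z \<le> legendre J p"
        proof (cases "\<forall>j. t $ j \<ge> 0")
          case False thus ?thesis unfolding z by (auto simp: S_H_eq)
        next
          case tn: True
          show ?thesis
          proof (cases "legendre J p")
            case (real c)
            have "(\<Sum>j\<in>UNIV. t $ j * H j p) \<le> (\<Sum>j\<in>UNIV. - (E $ j * t $ j))"
            proof (rule sum_mono)
              fix j
              have "t $ j * (H j p + E $ j) \<le> 0" using tn True[rule_format, of j]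
                by (simp add: mult_nonneg_nonpos)
              thus "t $ j * H j p \<le> - (E $ j * t $ j)" by (simp add: algebra_simps)
            qed
            hence le: "inner E t \<le> - (\<Sum>j\<in>UNIV. t $ j * H j p)"
              by (simp add: inner_vec_def sum_negf)
            have "ereal (inner (p, E) z) - S_H J H z \<le>
                  ereal (inner (p, E) z) - (ereal (inner p x) - legendre J p - ereal (\<Sum>j\<in>UNIV. t $ j * H j p))"
              unfolding z by (rule ereal_minus_mono) (auto intro: S_ge[OF tn])
            also have "\<dots> \<le> legendre J p" using le unfolding z real by simp
            finally show ?thesis .
          qed (auto simp: Jsnm)
        qed
      qed
      with low0 rhs show ?thesis by simp
    next
      case False
      then obtain k where k: "E $ k + H k p > 0" by (auto simp: not_le)
      have "(\<Sum>j\<in>UNIV. indicator_e (E $ j + H j p \<le> 0)) = \<infinity>"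
        using k by (subst sum_Pinfty) (auto simp: indicator_e_def intro!: exI[of _ k])
      hence rhs: "legendre J p + (\<Sum>j\<in>UNIV. indicator_e (E $ j + H j p \<le> 0)) = \<infinity>"
        using Jsnm[of p] by simp
      have "?L = \<infinity>"
      proof (cases "legendre J p")
        case PInf thus ?thesis using low0 by simp
      next
        case MInf thus ?thesis using Jsnm by simp
      next
        case (real c)
        have "ereal (c - 1) < (SUP x. ereal (inner p x) - J x)"
          using real unfolding legendre_def by simp
        then obtain x1 where x1: "ereal (c - 1) < ereal (inner p x1) - J x1"
          by (auto simp: less_SUP_iff)
        then obtain j1 where j1: "J x1 = ereal j1" using Jnm[of x1] by (cases "J x1") auto
        have x1': "c - 1 < inner p x1 - j1" using x1 j1 by simp
        obtain v dd where vd: "\<forall>q. ereal (inner v q + dd) \<le> ereal (H k q)"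
          and vdp: "inner v p + dd > - E $ k"
          using affine_minorant[OF Hcv[of k] Hcl[of k], of p "H k p" "- E $ k"] k by auto
        define \<delta> where "\<delta> = inner v p + dd + E $ k"
        have dpos: "\<delta> > 0" using vdp by (simp add: \<delta>_def)
        have bound: "ereal (c - 1 + s * \<delta>) \<le> ?L" if s0: "s \<ge> 0" for s
        proof -
          define t :: "real^'N" where "t = (\<chi> j. if j = k then s else 0)"
          have tn: "\<forall>j. t $ j \<ge> 0" using s0 by (simp add: t_def)
          have sumt: "(\<Sum>j\<in>UNIV. t $ j * f j) = s * f k" for f :: "'N \<Rightarrow> real"
          proof -
            have "(\<Sum>j\<in>UNIV. t $ j * f j) = (\<Sum>j\<in>UNIV. if j = k then s * f k else 0)"
              by (rule sum.cong) (auto simp: t_def)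
            thus ?thesis by simp
          qed
          have Et: "inner E t = E $ k * s"
          proof -
            have "(\<Sum>j\<in>UNIV. inner (E $ j) (t $ j)) = (\<Sum>j\<in>UNIV. if j = k then E $ k * s else 0)"
              by (rule sum.cong) (auto simp: t_def)
            thus ?thesis by (simp add: inner_vec_def)
          qed
          have Sle: "S_H J H (x1 + s *\<^sub>R v, t) \<le> ereal (j1 - s * dd)"
          proof (rule S_le[OF tn])
            fix q
            show "ereal (inner q (x1 + s *\<^sub>R v)) - legendre J q - ereal (\<Sum>j\<in>UNIV. t $ j * H j q)
                  \<le> ereal (j1 - s * dd)"
            proof (cases "legendre J q")
              case (real cq)
              have "ereal (inner q x1) - J x1 \<le> legendre J q" by (rule FY)
              hence fy: "inner q x1 - j1 \<le> cq" using real j1 by simp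
              have "inner v q + dd \<le> H k q" using vd by simp
              hence "s * (inner v q + dd) \<le> s * H k q" using s0 by (simp add: mult_left_mono)
              hence "inner q (x1 + s *\<^sub>R v) - cq - s * H k q \<le> j1 - s * dd"
                using fy by (simp add: inner_add_right inner_commute algebra_simps)
              thus ?thesis using real by (simp add: sumt)
            qed (auto simp: Jsnm)
          qed
          have "ereal (c - 1 + s * \<delta>) \<le> ereal (inner (p, E) (x1 + s *\<^sub>R v, t)) - ereal (j1 - s * dd)"
            using x1' by (simp add: Et \<delta>_def inner_add_right inner_commute algebra_simps)
          also have "\<dots> \<le> ereal (inner (p, E) (x1 + s *\<^sub>R v, t)) - S_H J H (x1 + s *\<^sub>R v, t)"
            by (rule ereal_minus_mono) (auto simp: Sle)
          also have "\<dots> \<le> ?L" by (rule FY)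
          finally show ?thesis .
        qed
        show ?thesis
        proof (rule ereal_top)
          fix B
          define s where "s = max 0 ((B - c + 1) / \<delta>)"
          have s0: "s \<ge> 0" by (simp add: s_def)
          have "(B - c + 1) / \<delta> \<le> s" by (simp add: s_def)
          hence "B - c + 1 \<le> s * \<delta>" using dpos by (simp add: divide_le_eq)
          hence "ereal B \<le> ereal (c - 1 + s * \<delta>)" by simp
          also have "\<dots> \<le> ?L" by (rule bound[OF s0])
          finally show "ereal B \<le> ?L" .
        qed
      qed
      with rhs show ?thesis by simp
    qed
  qed
  have part3: "S_H J H (x, t) \<noteq> \<infinity>" if coer: "\<forall>j. one_coercive (H j)" and tn: "\<forall>j. t $ j \<ge> 0" and tk0: "t $ k \<noteq> 0" for x t k
  proof -
    have "\<forall>j. \<exists>v d. \<forall>q. inner v q + d \<le> H j q"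
    proof
      fix j
      obtain v d where "\<forall>q. ereal (inner v q + d) \<le> ereal (H j q)"
        using affine_minorant[OF Hcv[of j] Hcl[of j], of 0 "H j 0" "H j 0 - 1"] by auto
      thus "\<exists>v d. \<forall>q. inner v q + d \<le> H j q" by auto
    qed
    then obtain V D where VD: "\<And>j q. inner (V j) q + D j \<le> H j q" by metis
    define tk where "tk = t $ k"
    have tkp: "tk > 0" using tn tk0 unfolding tk_def by (metis order_le_less)
    define M1 where "M1 = (\<Sum>j\<in>UNIV. t $ j * norm (V j))"
    define C1 where "C1 = (\<Sum>j\<in>UNIV. t $ j * \<bar>D j\<bar>)"
    define M where "M = norm x + norm x0 + M1 + tk * norm (V k)"
    define C where "C = j0 + C1 + tk * \<bar>D k\<bar>"
    have M1nn: "M1 \<ge> 0" unfolding M1_def using tn by (intro sum_nonneg) auto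
    have Mnn: "M \<ge> 0" unfolding M_def using M1nn tkp by simp
    have "filterlim (\<lambda>q. H k q / norm q) at_top at_infinity"
      using coer by (simp add: one_coercive_def)
    hence "eventually (\<lambda>q. H k q / norm q \<ge> M / tk) at_infinity"
      by (simp add: filterlim_at_top)
    then obtain R where R: "\<And>q. norm q \<ge> R \<Longrightarrow> H k q / norm q \<ge> M / tk"
      by (auto simp: eventually_at_infinity)
    define R' where "R' = max R 1"
    define B where "B = \<bar>C\<bar> + R' * M + tk * (norm (V k) * R' + \<bar>D k\<bar>)"
    have key: "inner q x - (inner q x0 - j0) - (\<Sum>j\<in>UNIV. t $ j * H j q) \<le> B" for q
    proof -
      have g1: "(\<Sum>j\<in>UNIV. t $ j * H j q) \<ge>
          (\<Sum>j\<in>UNIV. t $ j * (inner (V j) q + D j)) + tk * (H k q - inner (V k) q - D k)"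
      proof -
        have "t $ k * (H k q - (inner (V k) q + D k)) \<le> (\<Sum>j\<in>UNIV. t $ j * (H j q - (inner (V j) q + D j)))"
          by (rule member_le_sum[where f = "\<lambda>j. t $ j * (H j q - (inner (V j) q + D j))"])
             (use tn VD in \<open>auto intro: mult_nonneg_nonneg\<close>)
        hence "tk * (H k q - inner (V k) q - D k) \<le> (\<Sum>j\<in>UNIV. t $ j * (H j q - (inner (V j) q + D j)))"
          by (simp add: tk_def algebra_simps)
        thus ?thesis by (simp add: algebra_simps sum_subtractf sum.distrib)
      qed
      have g2: "\<bar>\<Sum>j\<in>UNIV. t $ j * (inner (V j) q + D j)\<bar> \<le> norm q * M1 + C1"
      proof -
        have "\<bar>\<Sum>j\<in>UNIV. t $ j * (inner (V j) q + D j)\<bar> \<le> (\<Sum>j\<in>UNIV. \<bar>t $ j * (inner (V j) q + D j)\<bar>)"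
          by (rule sum_abs)
        also have "\<dots> \<le> (\<Sum>j\<in>UNIV. norm q * (t $ j * norm (V j)) + t $ j * \<bar>D j\<bar>)"
        proof (rule sum_mono)
          fix j
          have "\<bar>inner (V j) q\<bar> \<le> norm (V j) * norm q" by (rule Cauchy_Schwarz_ineq2)
          hence "\<bar>inner (V j) q + D j\<bar> \<le> norm (V j) * norm q + \<bar>D j\<bar>" by linarith
          hence "t $ j * \<bar>inner (V j) q + D j\<bar> \<le> t $ j * (norm (V j) * norm q + \<bar>D j\<bar>)"
            using tn by (simp add: mult_left_mono)
          thus "\<bar>t $ j * (inner (V j) q + D j)\<bar> \<le> norm q * (t $ j * norm (V j)) + t $ j * \<bar>D j\<bar>"
          proof -
            have "\<bar>t $ j * (inner (V j) q + D j)\<bar> = t $ j * \<bar>inner (V j) q + D j\<bar>"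
              using tn by (simp add: abs_mult)
            thus ?thesis using \<open>t $ j * \<bar>inner (V j) q + D j\<bar> \<le> t $ j * (norm (V j) * norm q + \<bar>D j\<bar>)\<close>
              by (simp add: algebra_simps)
          qed
        qed
        also have "\<dots> = norm q * M1 + C1"
          by (simp add: M1_def C1_def sum.distrib sum_distrib_left)
        finally show ?thesis .
      qed
      have i1: "\<bar>inner q x\<bar> \<le> norm q * norm x" by (rule Cauchy_Schwarz_ineq2)
      have i2: "\<bar>inner q x0\<bar> \<le> norm q * norm x0" by (rule Cauchy_Schwarz_ineq2)
      have i3: "\<bar>inner (V k) q\<bar> \<le> norm (V k) * norm q" by (rule Cauchy_Schwarz_ineq2)
      have main: "inner q x - (inner q x0 - j0) - (\<Sum>j\<in>UNIV. t $ j * H j q) \<le> norm q * M + C - tk * H k q"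
      proof -
        have "tk * inner (V k) q \<le> tk * (norm (V k) * norm q)"
          using i3 tkp by (intro mult_left_mono) auto
        moreover have "tk * D k \<le> tk * \<bar>D k\<bar>" using tkp mult_left_mono[of "D k" "\<bar>D k\<bar>" tk] by simp
        ultimately show ?thesis using g1 g2 i1 i2
          unfolding M_def C_def by (simp add: algebra_simps)
      qed
      show ?thesis
      proof (cases "norm q \<ge> R'")
        case True
        hence nq: "norm q > 0" "norm q \<ge> R" by (auto simp: R'_def)
        have "H k q / norm q \<ge> M / tk" using R nq by auto
        hence "H k q \<ge> M / tk * norm q" using nq by (simp add: pos_le_divide_eq)
        hence "tk * H k q \<ge> M * norm q" using tkp by (simp add: field_simps)
        hence "norm q * M + C - tk * H k q \<le> C" by (simp add: algebra_simps)
        moreover have "0 \<le> R' * M + tk * (norm (V k) * R' + \<bar>D k\<bar>)"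
          using Mnn tkp by (simp add: R'_def)
        ultimately show ?thesis using main unfolding B_def by linarith
      next
        case False
        hence nq: "norm q \<le> R'" by simp
        have "H k q \<ge> - (norm (V k) * R' + \<bar>D k\<bar>)"
        proof -
          have "norm (V k) * norm q \<le> norm (V k) * R'" using nq by (simp add: mult_left_mono)
          thus ?thesis using VD[of k q] i3 by linarith
        qed
        hence "tk * (- (norm (V k) * R' + \<bar>D k\<bar>)) \<le> tk * H k q"
          using tkp by (intro mult_left_mono) auto
        hence "- (tk * H k q) \<le> tk * (norm (V k) * R' + \<bar>D k\<bar>)"
          by (simp add: algebra_simps)
        moreover have "norm q * M \<le> R' * M" using nq Mnn by (simp add: mult_right_mono)
        ultimately show ?thesis using main unfolding B_def by linarith
      qed
    qed
    have "S_H J H (x, t) \<le> ereal B"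
    proof (rule S_le[OF tn])
      fix q
      show "ereal (inner q x) - legendre J q - ereal (\<Sum>j\<in>UNIV. t $ j * H j q) \<le> ereal B"
      proof (cases "legendre J q")
        case (real cq)
        have "ereal (inner q x0) - J x0 \<le> legendre J q" by (rule FY)
        hence "inner q x0 - j0 \<le> cq" using real Jx0 by simp
        thus ?thesis using real key[of q] by simp
      qed (auto simp: Jsnm)
    qed
    thus ?thesis by auto
  qed
  show ?thesis using part1 part2 part3 Snm by blast
qed

end
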